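(* Let $G$ be a (fork, banner)-free graph that contains an induced claw. Then either $G$ has a homogeneous set, or there is a vertex $v$ in $G$ such that $G[M(v)]$ is perfect.
   Context: All graphs are finite and simple. For a vertex $v$, $M(v)=V(G)\setminus(N(v)\cup\{v\})$. The claw is $K_{1,3}$. The fork is obtained from $K_{1,3}$ by subdividing one edge once. The banner is the graph on $v_1,\dots,v_5$ where $v_1$ is adjacent to $v_2,v_3,v_4$, $\{v_2,v_3,v_4\}$ is stable, and $v_5$ is adjacent to $v_2,v_3$ but not to $v_1,v_4$ (i.e. a $4$-cycle with a pendant vertex). $G$ is $(H_1,H_2)$-free if it has no induced subgraph isomorphic to $H_1$ or $H_2$. A set $S\subseteq V(G)$ is a homogeneous set if $1<|S|<|V(G)|$ and every vertex outside $S$ is adjacent to all or none of $S$. A graph is perfect if every induced subgraph $H$ satisfies $\chi(H)=\omega(H)$. *)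

theory Defs
  imports Main
begin

definition simple_graph :: "'a set \<Rightarrow> ('a \<Rightarrow> 'a \<Rightarrow> bool) \<Rightarrow> bool" where
  "simple_graph V E \<longleftrightarrow> finite V \<and> (\<forall>x\<in>V. \<forall>y\<in>V. E x y \<longleftrightarrow> E y x) \<and> (\<forall>x\<in>V. \<not> E x x)"

definition contains_induced ::
  "'a set \<Rightarrow> ('a \<Rightarrow> 'a \<Rightarrow> bool) \<Rightarrow> nat \<Rightarrow> (nat \<Rightarrow> nat \<Rightarrow> bool) \<Rightarrow> bool" where
  "contains_induced V E n HE \<longleftrightarrow>
     (\<exists>f. inj_on f {..<n} \<and> f ` {..<n} \<subseteq> V \<and>
          (\<forall>i<n. \<forall>j<n. E (f i) (f j) \<longleftrightarrow> HE i j))"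

definition edges_of :: "(nat \<times> nat) list \<Rightarrow> nat \<Rightarrow> nat \<Rightarrow> bool" where
  "edges_of L i j \<longleftrightarrow> (i, j) \<in> set L \<or> (j, i) \<in> set L"

definition claw_edges :: "nat \<Rightarrow> nat \<Rightarrow> bool" where
  "claw_edges = edges_of [(0,1),(0,2),(0,3)]"

text \<open>Fork: claw with edge 0-3 subdivided by vertex 4.\<close>
definition fork_edges :: "nat \<Rightarrow> nat \<Rightarrow> bool" where
  "fork_edges = edges_of [(0,1),(0,2),(0,4),(4,3)]"

text \<open>Banner on v1..v5 (here 0..4): v1 adjacent to v2,v3,v4; v5 adjacent to v2,v3.\<close>
definition banner_edges :: "nat \<Rightarrow> nat \<Rightarrow> bool" where
  "banner_edges = edges_of [(0,1),(0,2),(0,3),(4,1),(4,2)]"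

definition has_claw where "has_claw V E \<longleftrightarrow> contains_induced V E 4 claw_edges"
definition has_fork where "has_fork V E \<longleftrightarrow> contains_induced V E 5 fork_edges"
definition has_banner where "has_banner V E \<longleftrightarrow> contains_induced V E 5 banner_edges"

definition nonneighbours :: "'a set \<Rightarrow> ('a \<Rightarrow> 'a \<Rightarrow> bool) \<Rightarrow> 'a \<Rightarrow> 'a set" where
  "nonneighbours V E v = {u \<in> V. u \<noteq> v \<and> \<not> E v u}"

definition homogeneous_set :: "'a set \<Rightarrow> ('a \<Rightarrow> 'a \<Rightarrow> bool) \<Rightarrow> 'a set \<Rightarrow> bool" where
  "homogeneous_set V E S \<longleftrightarrow> S \<subseteq> V \<and> 1 < card S \<and> card S < card V \<and>
     (\<forall>x\<in>V - S. (\<forall>s\<in>S. E x s) \<or> (\<forall>s\<in>S. \<not> E x s))"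

definition is_clique :: "('a \<Rightarrow> 'a \<Rightarrow> bool) \<Rightarrow> 'a set \<Rightarrow> bool" where
  "is_clique E C \<longleftrightarrow> (\<forall>x\<in>C. \<forall>y\<in>C. x \<noteq> y \<longrightarrow> E x y)"

definition clique_number :: "'a set \<Rightarrow> ('a \<Rightarrow> 'a \<Rightarrow> bool) \<Rightarrow> nat" where
  "clique_number S E = Max {card C | C. C \<subseteq> S \<and> is_clique E C}"

definition proper_colouring :: "'a set \<Rightarrow> ('a \<Rightarrow> 'a \<Rightarrow> bool) \<Rightarrow> nat \<Rightarrow> ('a \<Rightarrow> nat) \<Rightarrow> bool" where
  "proper_colouring S E k c \<longleftrightarrow> (\<forall>x\<in>S. c x < k) \<and> (\<forall>x\<in>S. \<forall>y\<in>S. E x y \<longrightarrow> c x \<noteq> c y)"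

definition chromatic_number :: "'a set \<Rightarrow> ('a \<Rightarrow> 'a \<Rightarrow> bool) \<Rightarrow> nat" where
  "chromatic_number S E = (LEAST k. \<exists>c. proper_colouring S E k c)"

definition perfect :: "'a set \<Rightarrow> ('a \<Rightarrow> 'a \<Rightarrow> bool) \<Rightarrow> bool" where
  "perfect S E \<longleftrightarrow> (\<forall>T\<subseteq>S. chromatic_number T E = clique_number T E)"

end

theory Submission imports Defs begin

lemma sg_sym: "simple_graph V E \<Longrightarrow> x \<in> V \<Longrightarrow> y \<in> V \<Longrightarrow> E x y \<longleftrightarrow> E y x"
  unfolding simple_graph_def by auto
lemma sg_irr: "simple_graph V E \<Longrightarrow> x \<in> V \<Longrightarrow> \<not> E x x"
  unfolding simple_graph_def by auto

lemma five_cases: "(i::nat) < 5 \<Longrightarrow> i = 0 \<or> i = 1 \<or> i = 2 \<or> i = 3 \<or> i = 4"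
  by auto

lemma fork_intro:
  assumes g: "simple_graph V E"
  and vs: "v0 \<in> V" "v1 \<in> V" "v2 \<in> V" "v3 \<in> V" "v4 \<in> V"
  and d: "distinct [v0,v1,v2,v3,v4]"
  and e: "E v0 v1" "E v0 v2" "E v0 v4" "E v4 v3"
  and ne: "\<not>E v0 v3" "\<not>E v1 v2" "\<not>E v1 v3" "\<not>E v1 v4" "\<not>E v2 v3" "\<not>E v2 v4"
  shows "has_fork V E"
proof -
  have s: "E v1 v0" "E v2 v0" "E v4 v0" "E v3 v4"
    "\<not>E v3 v0" "\<not>E v2 v1" "\<not>E v3 v1" "\<not>E v4 v1" "\<not>E v3 v2" "\<not>E v4 v2"
    "\<not>E v0 v0" "\<not>E v1 v1" "\<not>E v2 v2" "\<not>E v3 v3" "\<not>E v4 v4"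
    using e ne vs sg_sym[OF g] sg_irr[OF g] by auto
  define f where "f = (\<lambda>i. [v0,v1,v2,v3,v4] ! i)"
  have "inj_on f {..<5}" using d unfolding f_def inj_on_def
    by (simp add: nth_eq_iff_index_eq)
  moreover have "f ` {..<5} \<subseteq> V"
  proof
    fix y assume "y \<in> f ` {..<5}"
    then obtain i where "i < 5" "y = f i" by auto
    then show "y \<in> V" using five_cases[of i] vs unfolding f_def by auto
  qed
  moreover have "\<forall>i<5. \<forall>j<5. E (f i) (f j) \<longleftrightarrow> fork_edges i j"
  proof (intro allI impI)
    fix i j :: nat assume ij: "i < 5" "j < 5"
    from five_cases[OF ij(1)] five_cases[OF ij(2)]
    show "E (f i) (f j) \<longleftrightarrow> fork_edges i j"
      by (elim disjE) (simp_all add: f_def fork_edges_def edges_of_def e ne s)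
  qed
  ultimately show ?thesis unfolding has_fork_def contains_induced_def by blast
qed

lemma banner_intro:
  assumes g: "simple_graph V E"
  and vs: "v0 \<in> V" "v1 \<in> V" "v2 \<in> V" "v3 \<in> V" "v4 \<in> V"
  and d: "distinct [v0,v1,v2,v3,v4]"
  and e: "E v0 v1" "E v0 v2" "E v0 v3" "E v4 v1" "E v4 v2"
  and ne: "\<not>E v0 v4" "\<not>E v1 v2" "\<not>E v1 v3" "\<not>E v2 v3" "\<not>E v3 v4"
  shows "has_banner V E"
proof -
  have s: "E v1 v0" "E v2 v0" "E v3 v0" "E v1 v4" "E v2 v4"
    "\<not>E v4 v0" "\<not>E v2 v1" "\<not>E v3 v1" "\<not>E v3 v2" "\<not>E v4 v3"
    "\<not>E v0 v0" "\<not>E v1 v1" "\<not>E v2 v2" "\<not>E v3 v3" "\<not>E v4 v4"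
    using e ne vs sg_sym[OF g] sg_irr[OF g] by auto
  define f where "f = (\<lambda>i. [v0,v1,v2,v3,v4] ! i)"
  have "inj_on f {..<5}" using d unfolding f_def inj_on_def
    by (simp add: nth_eq_iff_index_eq)
  moreover have "f ` {..<5} \<subseteq> V"
  proof
    fix y assume "y \<in> f ` {..<5}"
    then obtain i where "i < 5" "y = f i" by auto
    then show "y \<in> V" using five_cases[of i] vs unfolding f_def by auto
  qed
  moreover have "\<forall>i<5. \<forall>j<5. E (f i) (f j) \<longleftrightarrow> banner_edges i j"
  proof (intro allI impI)
    fix i j :: nat assume ij: "i < 5" "j < 5"
    from five_cases[OF ij(1)] five_cases[OF ij(2)]
    show "E (f i) (f j) \<longleftrightarrow> banner_edges i j"
      by (elim disjE) (simp_all add: f_def banner_edges_def edges_of_def e ne s)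
  qed
  ultimately show ?thesis unfolding has_banner_def contains_induced_def by blast
qed

lemma claw_elim:
  assumes "has_claw V E"
  obtains x a b c where "x \<in> V" "a \<in> V" "b \<in> V" "c \<in> V" "distinct [x,a,b,c]"
    "E x a" "E x b" "E x c" "\<not> E a b" "\<not> E a c" "\<not> E b c"
proof -
  obtain f where f: "inj_on f {..<4}" "f ` {..<4} \<subseteq> V"
    "\<forall>i<4. \<forall>j<4. E (f i) (f j) \<longleftrightarrow> claw_edges i j"
    using assms unfolding has_claw_def contains_induced_def by blast
  have d: "distinct [f 0, f 1, f 2, f 3]"
    using f(1) unfolding inj_on_def by (auto simp: numeral_eq_Suc)
  have "E (f 0) (f 1)" "E (f 0) (f 2)" "E (f 0) (f 3)" "\<not> E (f 1) (f 2)" "\<not> E (f 1) (f 3)" "\<not> E (f 2) (f 3)"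
    using f(3) unfolding claw_edges_def edges_of_def by auto
  moreover have "f 0 \<in> V" "f 1 \<in> V" "f 2 \<in> V" "f 3 \<in> V" using f(2) by auto
  ultimately show ?thesis using that d by blast
qed


lemma module_lemma:
  assumes fin: "finite V" and CV: "C \<subseteq> V" and t1: "t1 \<in> C" and t2: "t2 \<in> C" "t2 \<noteq> t1"
    and a: "a \<in> V" "a \<notin> C"
    and inv: "\<And>y u. y \<in> V \<Longrightarrow> y \<notin> C \<Longrightarrow> u \<in> C \<Longrightarrow> E y u \<longleftrightarrow> E y t1"
  shows "homogeneous_set V E C"
proof -
  have fC: "finite C" using fin CV finite_subset by blast
  have "card {t1, t2} \<le> card C" using fC t1 t2 by (intro card_mono) auto
  then have "1 < card C" using t2 by simp
  moreover have "card C < card V" using CV a fin by (intro psubset_card_mono) auto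
  moreover have "\<forall>x\<in>V - C. (\<forall>s\<in>C. E x s) \<or> (\<forall>s\<in>C. \<not> E x s)"
    using inv by blast
  ultimately show ?thesis unfolding homogeneous_set_def using CV by blast
qed

lemma transfer:
  assumes g: "simple_graph V E" and nf: "\<not> has_fork V E" and nb: "\<not> has_banner V E"
    and V: "t \<in> V" "a \<in> V" "b \<in> V" "c \<in> V" "y \<in> V"
    and d: "distinct [t,a,b,c]" and yd: "y \<noteq> t" "y \<noteq> a" "y \<noteq> b" "y \<noteq> c"
    and e: "E t a" "E t b" "E t c" "\<not> E a b" "\<not> E a c" "\<not> E b c"
    and ty: "\<not> E t y"
  shows "(E y a \<and> E y b \<and> E y c) \<or> (\<not> E y a \<and> \<not> E y b \<and> \<not> E y c)"
proof -
  have s: "\<And>u v. u \<in> V \<Longrightarrow> v \<in> V \<Longrightarrow> E u v \<longleftrightarrow> E v u" using sg_sym[OF g] by blast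
  have sy: "E a y \<longleftrightarrow> E y a" "E b y \<longleftrightarrow> E y b" "E c y \<longleftrightarrow> E y c" "\<not> E y t"
    "\<not> E b a" "\<not> E c a" "\<not> E c b"
    using s V ty e by auto
  have one: False if "E y p" "\<not> E y q" "\<not> E y r" "distinct [p,q,r]" "p \<in> {a,b,c}" "q \<in> {a,b,c}" "r \<in> {a,b,c}" for p q r
  proof -
    have "has_fork V E"
      apply (rule fork_intro[OF g, of t q r y p])
      using that V d yd e sy ty by auto
    then show False using nf by blast
  qed
  have two: False if "E y p" "E y q" "\<not> E y r" "distinct [p,q,r]" "p \<in> {a,b,c}" "q \<in> {a,b,c}" "r \<in> {a,b,c}" for p q r
  proof -
    have "has_banner V E"
      apply (rule banner_intro[OF g, of t p q r y])
      using that V d yd e sy ty by auto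
    then show False using nb by blast
  qed
  show ?thesis
    using one[of a b c] one[of b a c] one[of c a b] two[of a b c] two[of a c b] two[of b c a] d
    by auto
qed


lemma perfect_stable:
  assumes fin: "finite S" and st: "\<And>u w. u \<in> S \<Longrightarrow> w \<in> S \<Longrightarrow> \<not> E u w"
  shows "perfect S E"
  unfolding perfect_def
proof (intro allI impI)
  fix T assume TS: "T \<subseteq> S"
  have fT: "finite T" using fin TS finite_subset by blast
  show "chromatic_number T E = clique_number T E"
  proof (cases "T = {}")
    case True
    have "chromatic_number T E = 0" unfolding chromatic_number_def proper_colouring_def True
      by (rule Least_eq_0) simp
    moreover have "{card C |C. C \<subseteq> T \<and> is_clique E C} = {0}" using True
      by (auto simp: is_clique_def)
    ultimately show ?thesis unfolding clique_number_def by simp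
  next
    case False
    then obtain t where t: "t \<in> T" by blast
    have "chromatic_number T E = 1" unfolding chromatic_number_def
    proof (rule Least_equality)
      show "\<exists>c. proper_colouring T E 1 c"
        by (rule exI[of _ "\<lambda>_. 0"]) (use st TS in \<open>auto simp: proper_colouring_def\<close>)
    next
      fix k assume "\<exists>c. proper_colouring T E k c"
      then obtain c where "proper_colouring T E k c" by blast
      then have "c t < k" using t unfolding proper_colouring_def by blast
      then show "1 \<le> k" by simp
    qed
    moreover have "{card C |C. C \<subseteq> T \<and> is_clique E C} = {0, 1}"
    proof
      show "{card C |C. C \<subseteq> T \<and> is_clique E C} \<subseteq> {0, 1}"
      proof
        fix n assume "n \<in> {card C |C. C \<subseteq> T \<and> is_clique E C}"
        then obtain C where C: "n = card C" "C \<subseteq> T" "is_clique E C" by blast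
        have fC: "finite C" using C(2) fT finite_subset by blast
        have "\<forall>a1\<in>C. \<forall>a2\<in>C. a1 = a2" using C st TS unfolding is_clique_def by blast
        then have "card C \<le> Suc 0" using card_le_Suc0_iff_eq[OF fC] by blast
        then show "n \<in> {0, 1}" using C(1) by auto
      qed
    next
      have "\<exists>C. 0 = card C \<and> C \<subseteq> T \<and> is_clique E C"
        by (rule exI[of _ "{}"]) (simp add: is_clique_def)
      moreover have "\<exists>C. 1 = card C \<and> C \<subseteq> T \<and> is_clique E C"
        by (rule exI[of _ "{t}"]) (simp add: is_clique_def t)
      ultimately show "{0, 1} \<subseteq> {card C |C. C \<subseteq> T \<and> is_clique E C}"
        by blast
    qed
    ultimately show ?thesis unfolding clique_number_def by simp
  qed
qed


theorem theorem3p12: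
  fixes V :: "'a set" and E :: "'a \<Rightarrow> 'a \<Rightarrow> bool"
  assumes "simple_graph V E"
    and "\<not> has_fork V E" and "\<not> has_banner V E"
    and "has_claw V E"
  shows "(\<exists>S. homogeneous_set V E S) \<or> (\<exists>v\<in>V. perfect (nonneighbours V E v) E)"
proof -
  note g = assms(1) and nf = assms(2) and nb = assms(3)
  have fin: "finite V" using g unfolding simple_graph_def by blast
  have s: "\<And>u v. u \<in> V \<Longrightarrow> v \<in> V \<Longrightarrow> E u v \<longleftrightarrow> E v u" using sg_sym[OF g] by blast
  have irr: "\<And>u. u \<in> V \<Longrightarrow> \<not> E u u" using sg_irr[OF g] by blast
  obtain x a b c where V: "x \<in> V" "a \<in> V" "b \<in> V" "c \<in> V" and d: "distinct [x,a,b,c]"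
    and e: "E x a" "E x b" "E x c" "\<not> E a b" "\<not> E a c" "\<not> E b c"
    using claw_elim[OF assms(4)] by blast
  have e': "\<not> E b a" "\<not> E c a" "\<not> E c b" using e V s by auto
  define T where "T = {t\<in>V. E t a \<and> E t b \<and> E t c}"
  have xT: "x \<in> T" using V e unfolding T_def by auto
  have abcT: "a \<notin> T" "b \<notin> T" "c \<notin> T" using irr V unfolding T_def by auto
  have tr: "(E y a \<and> E y b \<and> E y c) \<or> (\<not> E y a \<and> \<not> E y b \<and> \<not> E y c)"
    if "t \<in> T" "y \<in> V" "y \<noteq> t" "y \<notin> {a,b,c}" "\<not> E t y" for t y
  proof (rule transfer[OF g nf nb, of t a b c y])
    show "distinct [t,a,b,c]" using that(1) abcT d by auto
  qed (use that V e T_def in auto)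
  show ?thesis
  proof (cases "\<exists>t\<in>T. t \<noteq> x \<and> \<not> E x t")
    case True
    then obtain t where t: "t \<in> T" "t \<noteq> x" "\<not> E x t" by blast
    define R where "R = (\<lambda>u w. u \<in> T \<and> w \<in> T \<and> u \<noteq> w \<and> \<not> E u w)"
    define C where "C = {w. R\<^sup>*\<^sup>* x w}"
    have CT: "C \<subseteq> T"
    proof
      fix w assume "w \<in> C"
      then have "R\<^sup>*\<^sup>* x w" unfolding C_def by simp
      then show "w \<in> T" by (induction rule: rtranclp_induct) (auto simp: R_def xT)
    qed
    have B: "E y w" if "u \<in> T" "w \<in> T" "u \<noteq> w" "\<not> E u w" "y \<in> V" "y \<notin> T" "y \<notin> {a,b,c}" "E y u"
      for u w y
    proof (rule ccontr)
      assume nw: "\<not> E y w"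
      have uu: "u \<in> V" "E u a" "E u b" using that(1) unfolding T_def by auto
      have ww: "w \<in> V" "E w a" "E w b" using that(2) unfolding T_def by auto
      have ne1: "u \<noteq> a" "u \<noteq> b" "w \<noteq> a" "w \<noteq> b" using that(1,2) abcT by auto
      have ne2: "y \<noteq> a" "y \<noteq> b" "y \<noteq> c" using that(7) by auto
      have ne3: "y \<noteq> u" "y \<noteq> w" using that(1,2,6) by auto
      have "\<not> E w y" using nw s[OF ww(1) that(5)] by simp
      then have "(E y a \<and> E y b \<and> E y c) \<or> (\<not> E y a \<and> \<not> E y b \<and> \<not> E y c)"
        using tr[of w y] that(2,5,7) ne3 by auto
      moreover have "\<not> (E y a \<and> E y b \<and> E y c)" using that(5,6) unfolding T_def by auto
      ultimately have none: "\<not> E y a" "\<not> E y b" by auto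
      have "has_banner V E"
      proof (rule banner_intro[OF g, of u a b y w])
        show "distinct [u, a, b, y, w]" using ne1 ne2 ne3 that(3) d by auto
        show "E u y" using that(8) s[OF uu(1) that(5)] by simp
        show "\<not> E a y" using none s[OF V(2) that(5)] by simp
        show "\<not> E b y" using none s[OF V(3) that(5)] by simp
        show "\<not> E y w" by (rule nw)
        show "\<not> E u w" by (rule that(4))
        show "\<not> E a b" by (rule e(4))
      qed (use uu ww V that(5) in auto)
      then show False using nb by blast
    qed
    have xC: "x \<in> C" by (simp add: C_def)
    have "homogeneous_set V E C"
    proof (rule module_lemma[OF fin, of C x t a])
      show "C \<subseteq> V" using CT T_def by auto
      show "x \<in> C" by (simp add: C_def)
      show "t \<in> C" using t xT unfolding C_def R_def by auto
      show "t \<noteq> x" by (rule t(2))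
      show "a \<in> V" "a \<notin> C" using V CT abcT by auto
    next
      fix y u assume y: "y \<in> V" "y \<notin> C" and u: "u \<in> C"
      have uT: "u \<in> T" using u CT by auto
      show "E y u \<longleftrightarrow> E y x"
      proof (cases "y \<in> {a,b,c}")
        case True
        then have "E y u" "E y x" using uT xT s V unfolding T_def by auto
        then show ?thesis by simp
      next
        case nabc: False
        show ?thesis
        proof (cases "y \<in> T")
          case True
          have "E y w" if "w \<in> C" for w
          proof (rule ccontr)
            assume "\<not> E y w"
            moreover have "w \<in> T" using that CT by auto
            moreover have "w \<noteq> y" using that y by auto
            ultimately have "R w y" using True s unfolding R_def T_def by auto
            then have "y \<in> C" using that unfolding C_def by auto
            then show False using y by blast
          qed
          then show ?thesis using u xC by auto
        next
          case False
          have "R\<^sup>*\<^sup>* x w \<Longrightarrow> (E y w \<longleftrightarrow> E y x)" for w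
          proof (induction rule: rtranclp_induct)
            case base
            then show ?case by simp
          next
            case (step u w)
            then have "u \<in> T" "w \<in> T" "u \<noteq> w" "\<not> E u w" unfolding R_def by auto
            moreover have "\<not> E w u" using calculation s T_def by auto
            moreover have "y \<in> V" "y \<notin> T" "y \<notin> {a,b,c}" using y False nabc by auto
            ultimately have "E y u \<longleftrightarrow> E y w" using B[of u w y] B[of w u y] by blast
            then show ?case using step.IH by simp
          qed
          then show ?thesis using u unfolding C_def by blast
        qed
      qed
    qed
    then show ?thesis by blast
  next
    case False
    define M where "M = nonneighbours V E x"
    have Mp: "y \<in> V" "y \<noteq> x" "\<not> E x y" "y \<notin> T" "y \<notin> {a,b,c}" if "y \<in> M" for y
    proof -
      show yV: "y \<in> V" "y \<noteq> x" "\<not> E x y" using that unfolding M_def nonneighbours_def by auto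
      show "y \<notin> T" using False yV by blast
      show "y \<notin> {a,b,c}" using e(1-3) yV(3) by auto
    qed
    have Mn: "\<not> E y a" "\<not> E y b" "\<not> E y c" if "y \<in> M" for y
    proof -
      have "(E y a \<and> E y b \<and> E y c) \<or> (\<not> E y a \<and> \<not> E y b \<and> \<not> E y c)"
        by (rule tr[OF xT Mp(1)[OF that] Mp(2)[OF that] Mp(5)[OF that] Mp(3)[OF that]])
      moreover have "\<not> (E y a \<and> E y b \<and> E y c)" using Mp(1,4)[OF that] unfolding T_def by blast
      ultimately show "\<not> E y a" "\<not> E y b" "\<not> E y c" by auto
    qed
    show ?thesis
    proof (cases "\<exists>y1 y2. y1 \<in> M \<and> y2 \<in> M \<and> E y1 y2")
      case True
      then obtain y1 y2 where y12: "y1 \<in> M" "y2 \<in> M" "E y1 y2" by blast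
      define R where "R = (\<lambda>u w. u \<in> M \<and> w \<in> M \<and> E u w)"
      define C where "C = {w. R\<^sup>*\<^sup>* y1 w}"
      have CM: "C \<subseteq> M"
      proof
        fix w assume "w \<in> C"
        then have "R\<^sup>*\<^sup>* y1 w" unfolding C_def by simp
        then show "w \<in> M" by (induction rule: rtranclp_induct) (auto simp: R_def y12)
      qed
      have D: "E z w" if "u \<in> M" "w \<in> M" "E u w" "z \<in> V" "z \<notin> M" "z \<noteq> x" "E z u" for u w z
      proof (rule ccontr)
        assume nw: "\<not> E z w"
        have uV: "u \<in> V" "w \<in> V" using Mp(1) that(1,2) by auto
        have xz: "E x z" using that(4,5,6) unfolding M_def nonneighbours_def by auto
        have xu: "\<not> E x u" "x \<noteq> u" "x \<noteq> w" using Mp(2,3) that(1,2) by auto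
        have uw: "u \<noteq> w" "z \<noteq> u" "z \<noteq> w" using irr uV that by auto
        have pf: "p \<in> V" "E x p" "\<not> E p u" "\<not> E p w" "x \<noteq> p" "p \<noteq> u" "p \<noteq> w" "p \<noteq> z"
          "E p z \<longleftrightarrow> E z p"
          if "p \<in> {a,b,c}" for p
        proof -
          show pV: "p \<in> V" using that V by auto
          show "E x p" using that e by auto
          show npu: "\<not> E p u" using that Mn[OF \<open>u \<in> M\<close>] s[OF pV uV(1)] by auto
          show "\<not> E p w" using that Mn[OF \<open>w \<in> M\<close>] s[OF pV uV(2)] by auto
          show "x \<noteq> p" using that d by auto
          show "p \<noteq> u" "p \<noteq> w" using that Mp(5) \<open>u \<in> M\<close> \<open>w \<in> M\<close> by auto
          show "p \<noteq> z" using npu \<open>E z u\<close> by auto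
          show "E p z \<longleftrightarrow> E z p" using s[OF pV \<open>z \<in> V\<close>] .
        qed
        have pq: "\<not> E p q" if "p \<in> {a,b,c}" "q \<in> {a,b,c}" for p q
          using that e e' irr V by auto
        have f1: False if "p \<in> {a,b,c}" "q \<in> {a,b,c}" "p \<noteq> q" "\<not> E z p" "\<not> E z q" for p q
        proof -
          have "has_fork V E"
          proof (rule fork_intro[OF g, of x p q u z])
            show "distinct [x, p, q, u, z]" using pf[OF that(1)] pf[OF that(2)] that(3) xu uw xz irr V(1)
              by auto
          qed (use pf[OF that(1)] pf[OF that(2)] pq[OF that(1,2)] that(4,5) V(1) uV xz \<open>E z u\<close> xu \<open>z \<in> V\<close> in auto)
          then show False using nf by blast
        qed
        have f2: False if "p \<in> {a,b,c}" "q \<in> {a,b,c}" "p \<noteq> q" "E z p" "E z q" for p q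
        proof -
          have "has_fork V E"
          proof (rule fork_intro[OF g, of z p q w u])
            show "distinct [z, p, q, w, u]" using pf[OF that(1)] pf[OF that(2)] that(3) uw by auto
          qed (use pf[OF that(1)] pf[OF that(2)] pq[OF that(1,2)] that(4,5) uV nw \<open>E z u\<close> \<open>E u w\<close> \<open>z \<in> V\<close> in auto)
          then show False using nf by blast
        qed
        have "a \<noteq> b" "a \<noteq> c" "b \<noteq> c" using d by auto
        then show False using f1[of a b] f1[of a c] f1[of b c] f2[of a b] f2[of a c] f2[of b c]
          by blast
      qed
      have y1C: "y1 \<in> C" by (simp add: C_def)
      have "homogeneous_set V E C"
      proof (rule module_lemma[OF fin, of C y1 y2 a])
        show "C \<subseteq> V" using CM Mp by auto
        show "y1 \<in> C" by (simp add: C_def)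
        show "y2 \<in> C" using y12 unfolding C_def R_def by auto
        show "y2 \<noteq> y1" using y12 irr Mp by auto
        show "a \<in> V" using V by auto
        show "a \<notin> C"
        proof
          assume "a \<in> C"
          then have "a \<in> M" using CM by auto
          then show False using Mp(5) by blast
        qed
      next
        fix z u assume z: "z \<in> V" "z \<notin> C" and u: "u \<in> C"
        have uM: "u \<in> M" using u CM by auto
        show "E z u \<longleftrightarrow> E z y1"
        proof (cases "z = x")
          case True
          then show ?thesis using Mp uM y12 by auto
        next
          case zx: False
          show ?thesis
          proof (cases "z \<in> M")
            case True
            have "\<not> E z w" if "w \<in> C" for w
            proof
              assume "E z w"
              moreover have "w \<in> M" "w \<in> V" using that CM Mp by auto
              ultimately have "R w z" using True s z unfolding R_def by auto
              then have "z \<in> C" using that unfolding C_def by auto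
              then show False using z by blast
            qed
            then show ?thesis using u y1C by auto
          next
            case False
            have "R\<^sup>*\<^sup>* y1 w \<Longrightarrow> (E z w \<longleftrightarrow> E z y1)" for w
            proof (induction rule: rtranclp_induct)
              case base
              then show ?case by simp
            next
              case (step u w)
              then have "u \<in> M" "w \<in> M" "E u w" unfolding R_def by auto
              moreover have "E w u" using calculation s Mp by auto
              moreover have "z \<in> V" "z \<notin> M" "z \<noteq> x" using z False zx by auto
              ultimately have "E z u \<longleftrightarrow> E z w" using D[of u w z] D[of w u z] by blast
              then show ?case using step.IH by simp
            qed
            then show ?thesis using u unfolding C_def by blast
          qed
        qed
      qed
      then show ?thesis by blast
    next
      case False
      have "finite M" using fin unfolding M_def nonneighbours_def by auto
      then have "perfect M E" using False by (intro perfect_stable) auto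
      then show ?thesis using V unfolding M_def by blast
    qed
  qed
qed

end
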